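(* Let $N\ge2$, $a\ge0$, and let $(X_t)_{t\ge0}$ be the continuous-time Markov chain on $\{0,1,\dots,N\}$ with transitions $j\to j-1$ at rate $j$ and $j\to j+1$ at rate $a\,\frac{j(j-1)(N-j)}{N(N-1)}$, started from $X_0=N$. For $j=1,\dots,N$ let $\tau_j=\int_0^\infty P(X_t=j\mid X_0=N)\,dt$. Then $$\sum_{j=1}^N j\,\tau_j \le \sum_{j=1}^N\sum_{i=0}^j (a/4)^i.$$
   Context: The chain $X_t$ is the number of individuals in a single patch of the contact process with sexual reproduction in the absence of migrations (outer birth parameter $b=0$); $\tau_j$ is the expected total time spent in state $j$. *)

theory Defs
  imports "HOL-Analysis.Analysis"
begin

definition death_rate :: "nat \<Rightarrow> real" where
  "death_rate j = real j"

definition birth_rate :: "nat \<Rightarrow> real \<Rightarrow> nat \<Rightarrow> real" where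
  "birth_rate N a j = a * (real j * (real j - 1) * (real N - real j)) / (real N * (real N - 1))"

definition gen :: "nat \<Rightarrow> real \<Rightarrow> nat \<Rightarrow> nat \<Rightarrow> real" where
  "gen N a i j =
     (if i \<le> N \<and> j \<le> N then
        (if j = Suc i then birth_rate N a i
         else if Suc j = i then death_rate i
         else if i = j then - (birth_rate N a i + death_rate i)
         else 0)
      else 0)"

fun matpow :: "nat \<Rightarrow> (nat \<Rightarrow> nat \<Rightarrow> real) \<Rightarrow> nat \<Rightarrow> nat \<Rightarrow> nat \<Rightarrow> real" where
  "matpow N M 0 i j = (if i = j then 1 else 0)"
| "matpow N M (Suc k) i j = (\<Sum>l\<in>{0..N}. matpow N M k i l * M l j)"

definition trans_prob :: "nat \<Rightarrow> real \<Rightarrow> real \<Rightarrow> nat \<Rightarrow> nat \<Rightarrow> real" where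
  "trans_prob N a t i j = (\<Sum>k. t ^ k / fact k * matpow N (gen N a) k i j)"

definition occ_time :: "nat \<Rightarrow> real \<Rightarrow> nat \<Rightarrow> ennreal" where
  "occ_time N a j = (\<integral>\<^sup>+ t. ennreal (trans_prob N a t N j) * indicator {0..} t \<partial>lborel)"

end

theory Submission
  imports Defs
begin

locale L = fixes N :: nat and a :: real
begin

definition K :: real where "K = (\<Sum>l\<in>{0..N}. \<Sum>j\<in>{0..N}. \<bar>gen N a l j\<bar>)"

lemma gen_le_K: "\<bar>gen N a l j\<bar> \<le> K"
proof (cases "l \<le> N \<and> j \<le> N")
  case True
  have "\<bar>gen N a l j\<bar> \<le> (\<Sum>j\<in>{0..N}. \<bar>gen N a l j\<bar>)"
    by (rule member_le_sum) (use True in auto)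
  also have "\<dots> \<le> K" unfolding K_def
    by (rule member_le_sum[where f="\<lambda>l. \<Sum>j\<in>{0..N}. \<bar>gen N a l j\<bar>"]) (use True in \<open>auto intro: sum_nonneg\<close>)
  finally show ?thesis .
next
  case False
  then have "gen N a l j = 0" by (auto simp: gen_def)
  moreover have "K \<ge> 0" unfolding K_def by (intro sum_nonneg) auto
  ultimately show ?thesis by simp
qed

lemma K_nonneg: "K \<ge> 0" using gen_le_K[of 0 0] by linarith

lemma matpow_bound: "\<bar>matpow N (gen N a) k i j\<bar> \<le> (real (Suc N) * K)^k"
proof (induction k arbitrary: j)
  case 0 then show ?case by simp
next
  case (Suc k)
  have "\<bar>matpow N (gen N a) (Suc k) i j\<bar> \<le> (\<Sum>l\<in>{0..N}. \<bar>matpow N (gen N a) k i l * gen N a l j\<bar>)"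
    by (simp add: sum_abs)
  also have "\<dots> \<le> (\<Sum>l\<in>{0..N}. (real (Suc N) * K)^k * K)"
    using K_nonneg by (intro sum_mono) (simp add: abs_mult mult_mono[OF Suc.IH gen_le_K] del: of_nat_Suc)
  also have "\<dots> = (real (Suc N) * K)^Suc k" by (simp add: algebra_simps)
  finally show ?case .
qed

definition cf :: "nat \<Rightarrow> nat \<Rightarrow> nat \<Rightarrow> real" where
  "cf i j k = matpow N (gen N a) k i j / fact k"

lemma summable_cf: "summable (\<lambda>k. cf i j k * t ^ k)"
proof (rule summable_comparison_test)
  let ?x = "real (Suc N) * K * \<bar>t\<bar>"
  show "summable (\<lambda>n. inverse (fact n) * ?x ^ n)" by (rule summable_exp)
  show "\<exists>M. \<forall>n\<ge>M. norm (cf i j n * t ^ n) \<le> inverse (fact n) * ?x ^ n"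
  proof (intro exI allI impI)
    fix n :: nat
    have "norm (cf i j n * t ^ n) = \<bar>matpow N (gen N a) n i j\<bar> * \<bar>t\<bar>^n / fact n"
      by (simp add: cf_def abs_mult power_abs)
    also have "\<dots> \<le> (real (Suc N) * K)^n * \<bar>t\<bar>^n / fact n"
      by (intro divide_right_mono mult_right_mono matpow_bound) auto
    also have "\<dots> = inverse (fact n) * ?x ^ n"
      by (simp add: power_mult_distrib[symmetric] algebra_simps divide_inverse)
    finally show "norm (cf i j n * t ^ n) \<le> inverse (fact n) * ?x ^ n" .
  qed
qed

lemma trans_prob_eq: "trans_prob N a t i j = (\<Sum>k. cf i j k * t ^ k)"
  unfolding trans_prob_def cf_def by (simp add: field_simps)

lemma diffs_cf: "diffs (cf i j) k = (\<Sum>l\<in>{0..N}. cf i l k * gen N a l j)"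
proof -
  have "diffs (cf i j) k = matpow N (gen N a) (Suc k) i j / fact k"
    unfolding diffs_def cf_def by (simp add: fact_Suc del: of_nat_Suc)
  then show ?thesis by (simp add: cf_def sum_divide_distrib[symmetric])
qed

lemma trans_prob_deriv:
  "((\<lambda>t. trans_prob N a t i j) has_field_derivative
     (\<Sum>l\<in>{0..N}. trans_prob N a t i l * gen N a l j)) (at t)"
proof -
  have "((\<lambda>t. \<Sum>k. cf i j k * t ^ k) has_field_derivative (\<Sum>k. diffs (cf i j) k * t ^ k)) (at t)"
    by (rule termdiffs_strong_converges_everywhere) (rule summable_cf)
  also have "(\<Sum>k. diffs (cf i j) k * t ^ k) = (\<Sum>k. \<Sum>l\<in>{0..N}. (cf i l k * t ^ k) * gen N a l j)"
    by (intro suminf_cong) (simp add: diffs_cf sum_distrib_right sum_distrib_left mult_ac)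
  also have "\<dots> = (\<Sum>l\<in>{0..N}. \<Sum>k. (cf i l k * t ^ k) * gen N a l j)"
    by (rule suminf_sum) (intro summable_mult2 summable_cf)
  also have "\<dots> = (\<Sum>l\<in>{0..N}. trans_prob N a t i l * gen N a l j)"
    by (intro sum.cong refl) (simp add: trans_prob_eq suminf_mult2[OF summable_cf])
  finally show ?thesis by (simp add: trans_prob_eq[abs_def])
qed


lemma summable_cf_norm: "summable (\<lambda>k. norm (cf i j k * t ^ k))"
proof (rule summable_comparison_test)
  let ?x = "real (Suc N) * K * \<bar>t\<bar>"
  show "summable (\<lambda>n. inverse (fact n) * ?x ^ n)" by (rule summable_exp)
  show "\<exists>M. \<forall>n\<ge>M. norm (norm (cf i j n * t ^ n)) \<le> inverse (fact n) * ?x ^ n"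
  proof (intro exI allI impI)
    fix n :: nat
    have "norm (norm (cf i j n * t ^ n)) = \<bar>matpow N (gen N a) n i j\<bar> * \<bar>t\<bar>^n / fact n"
      by (simp add: cf_def abs_mult power_abs)
    also have "\<dots> \<le> (real (Suc N) * K)^n * \<bar>t\<bar>^n / fact n"
      by (intro divide_right_mono mult_right_mono matpow_bound) auto
    also have "\<dots> = inverse (fact n) * ?x ^ n"
      by (simp add: power_mult_distrib[symmetric] algebra_simps divide_inverse)
    finally show "norm (norm (cf i j n * t ^ n)) \<le> inverse (fact n) * ?x ^ n" .
  qed
qed

definition Mc :: "nat \<Rightarrow> nat \<Rightarrow> real" where
  "Mc l j = gen N a l j + (if l = j then K else 0)"

definition ee :: "nat \<Rightarrow> nat \<Rightarrow> real" where
  "ee k m = of_nat (k choose m) * K ^ (k - m)"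

lemma ee_Suc: "ee (Suc k) m = (if m = 0 then 0 else ee k (m - 1)) + K * ee k m"
proof (cases m)
  case 0 then show ?thesis by (simp add: ee_def)
next
  case (Suc m')
  show ?thesis
  proof (cases "m' < k")
    case True
    then have "K ^ (k - m') = K * K ^ (k - Suc m')"
      by (metis Suc_diff_Suc power_Suc)
    then show ?thesis using Suc True by (simp add: ee_def algebra_simps)
  next
    case False
    then show ?thesis using Suc by (cases "m' = k") (auto simp: ee_def)
  qed
qed

lemma matpow_out: "i \<le> N \<Longrightarrow> N < j \<Longrightarrow> matpow N (gen N a) m i j = 0"
  by (cases m) (auto simp: gen_def)

lemma matpow_Mc: "i \<le> N \<Longrightarrow> matpow N Mc k i j = (\<Sum>m\<le>k. ee k m * matpow N (gen N a) m i j)"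
proof (induction k arbitrary: j)
  case 0 then show ?case by (simp add: ee_def)
next
  case (Suc k)
  let ?G = "matpow N (gen N a)"
  have "matpow N Mc (Suc k) i j = (\<Sum>l\<in>{0..N}. (\<Sum>m\<le>k. ee k m * ?G m i l) * (gen N a l j + (if l = j then K else 0)))"
    using Suc.IH[OF Suc.prems] by (simp only: matpow.simps) (simp add: Mc_def)
  also have "\<dots> = (\<Sum>m\<le>k. ee k m * (\<Sum>l\<in>{0..N}. ?G m i l * gen N a l j))
       + (\<Sum>m\<le>k. ee k m * (\<Sum>l\<in>{0..N}. ?G m i l * (if l = j then K else 0)))"
    by (simp add: distrib_left sum.distrib sum_distrib_left sum_distrib_right mult_ac sum.swap[of _ "{0..N}"])
  finally have 0: "matpow N Mc (Suc k) i j = (\<Sum>m\<le>k. ee k m * (\<Sum>l\<in>{0..N}. ?G m i l * gen N a l j))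
       + (\<Sum>m\<le>k. ee k m * (\<Sum>l\<in>{0..N}. ?G m i l * (if l = j then K else 0)))" .
  have Kt: "(\<Sum>l\<in>{0..N}. ?G m i l * (if l = j then K else 0)) = K * ?G m i j" for m
    using matpow_out[OF Suc.prems, of j m] by (cases "j \<le> N") (auto simp: if_distrib[of "\<lambda>x. _ * x"] cong: if_cong)
  have 1: "matpow N Mc (Suc k) i j = (\<Sum>m\<le>k. ee k m * ?G (Suc m) i j) + (\<Sum>m\<le>k. ee k m * (K * ?G m i j))"
    unfolding 0 Kt by simp
  have "(\<Sum>m\<le>Suc k. ee (Suc k) m * ?G m i j)
      = (\<Sum>m\<le>Suc k. (if m = 0 then 0 else ee k (m - 1)) * ?G m i j) + (\<Sum>m\<le>Suc k. K * ee k m * ?G m i j)"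
    by (simp add: ee_Suc distrib_right sum.distrib del: sum.atMost_Suc)
  also have "(\<Sum>m\<le>Suc k. (if m = 0 then 0 else ee k (m - 1)) * ?G m i j) = (\<Sum>m\<le>k. ee k m * ?G (Suc m) i j)"
    by (subst sum.atMost_Suc_shift) simp
  also have "(\<Sum>m\<le>Suc k. K * ee k m * ?G m i j) = (\<Sum>m\<le>k. ee k m * (K * ?G m i j))"
    by (simp add: ee_def mult_ac)
  finally show ?case using 1 by simp
qed


lemma birth_nonneg: "a \<ge> 0 \<Longrightarrow> l \<le> N \<Longrightarrow> birth_rate N a l \<ge> 0"
proof -
  assume a: "a \<ge> 0" and l: "l \<le> N"
  have h: "real m * (real m - 1) \<ge> 0" for m :: nat by (cases m) auto
  show ?thesis unfolding birth_rate_def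
    using a l h[of N] mult_nonneg_nonneg[OF h[of l], of "real N - real l"]
    by (intro divide_nonneg_nonneg mult_nonneg_nonneg[of a]) auto
qed

lemma Mc_nonneg: "a \<ge> 0 \<Longrightarrow> l \<le> N \<Longrightarrow> Mc l j \<ge> 0"
proof -
  assume a: "a \<ge> 0" and l: "l \<le> N"
  show ?thesis
  proof (cases "l = j")
    case True
    then show ?thesis using gen_le_K[of l l] by (simp add: Mc_def)
  next
    case False
    then show ?thesis using birth_nonneg[OF a l] by (auto simp: Mc_def gen_def death_rate_def)
  qed
qed

lemma matpow_Mc_nonneg: "a \<ge> 0 \<Longrightarrow> matpow N Mc k i j \<ge> 0"
  by (induction k arbitrary: j) (auto intro!: sum_nonneg mult_nonneg_nonneg Mc_nonneg)

lemma cauchy_term: "i0 \<le> N \<Longrightarrow>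
  (\<Sum>i\<le>k. (cf i0 j i * t^i) * ((K*t)^(k-i) /\<^sub>R fact (k-i))) = t^k / fact k * matpow N Mc k i0 j"
proof -
  assume i0: "i0 \<le> N"
  have "t^k / fact k * matpow N Mc k i0 j = (\<Sum>m\<le>k. t^k / fact k * (ee k m * matpow N (gen N a) m i0 j))"
    by (simp add: matpow_Mc[OF i0] sum_distrib_left)
  also have "\<dots> = (\<Sum>i\<le>k. (cf i0 j i * t^i) * ((K*t)^(k-i) /\<^sub>R fact (k-i)))"
  proof (intro sum.cong refl)
    fix m assume "m \<in> {..k}"
    then obtain d where k: "k = m + d" by (metis atMost_iff le_Suc_ex)
    show "t^k / fact k * (ee k m * matpow N (gen N a) m i0 j) = (cf i0 j m * t^m) * ((K*t)^(k-m) /\<^sub>R fact (k-m))"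
      unfolding ee_def cf_def using k
      by (simp add: binomial_fact power_add power_mult_distrib field_simps)
  qed
  finally show ?thesis by simp
qed

lemma trans_prob_nonneg: "a \<ge> 0 \<Longrightarrow> t \<ge> 0 \<Longrightarrow> i0 \<le> N \<Longrightarrow> trans_prob N a t i0 j \<ge> 0"
proof -
  assume a: "a \<ge> 0" and t: "t \<ge> 0" and i0: "i0 \<le> N"
  have cp: "(\<lambda>k. \<Sum>i\<le>k. (cf i0 j i * t^i) * ((K*t)^(k-i) /\<^sub>R fact (k-i)))
     sums ((\<Sum>k. cf i0 j k * t^k) * (\<Sum>k. (K*t)^k /\<^sub>R fact k))"
    by (rule Cauchy_product_sums[OF summable_cf_norm summable_norm_exp])
  have e: "(\<Sum>k. (K*t)^k /\<^sub>R fact k) = exp (K*t)"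
    using exp_converges sums_unique by metis
  have "0 \<le> (\<Sum>k. t^k / fact k * matpow N Mc k i0 j)"
    using cp unfolding cauchy_term[OF i0]
    by (intro suminf_nonneg) (auto simp: sums_iff t matpow_Mc_nonneg[OF a])
  also have "\<dots> = trans_prob N a t i0 j * exp (K*t)"
    using cp unfolding cauchy_term[OF i0] e trans_prob_eq[symmetric] by (simp add: sums_iff)
  finally show ?thesis by (simp add: zero_le_mult_iff)
qed


definition DD :: "nat \<Rightarrow> real" where "DD n = (\<Sum>m\<le>n. (a/4)^m)"
definition hh :: "nat \<Rightarrow> real" where "hh j = (\<Sum>k\<in>{1..j}. DD (N - k))"

lemma DD_Suc: "DD (Suc n) = 1 + (a/4) * DD n"
  unfolding DD_def by (subst sum.atMost_Suc_shift) (simp add: sum_distrib_left)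

lemma DD_nonneg: "a \<ge> 0 \<Longrightarrow> DD n \<ge> 0"
  unfolding DD_def by (intro sum_nonneg) auto

lemma hh_Suc: "hh (Suc l) = hh l + DD (N - Suc l)"
  unfolding hh_def by simp

lemma hh_nonneg: "a \<ge> 0 \<Longrightarrow> hh j \<ge> 0"
  unfolding hh_def by (intro sum_nonneg DD_nonneg)

lemma birth_N: "birth_rate N a N = 0"
  by (simp add: birth_rate_def)

lemma Qh_eq: "l \<le> N \<Longrightarrow> (\<Sum>j\<in>{0..N}. gen N a l j * hh j)
   = birth_rate N a l * hh (Suc l) + death_rate l * hh (l - 1) - (birth_rate N a l + death_rate l) * hh l"
proof -
  assume l: "l \<le> N"
  let ?b = "birth_rate N a l" and ?d = "death_rate l"
  have "(\<Sum>j\<in>{0..N}. gen N a l j * hh j) = (\<Sum>j\<in>{0..N}. (if j = Suc l then ?b * hh j else 0)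
      + (if j = l - 1 then (if 0 < l then ?d * hh j else 0) else 0) + (if j = l then - (?b + ?d) * hh j else 0))"
    using l by (intro sum.cong refl) (auto simp: gen_def)
  also have "\<dots> = (if Suc l \<le> N then ?b * hh (Suc l) else 0) + (if 0 < l then ?d * hh (l - 1) else 0)
        - (?b + ?d) * hh l"
    using l by (simp add: sum.distrib) (auto simp: algebra_simps)
  also have "\<dots> = ?b * hh (Suc l) + ?d * hh (l - 1) - (?b + ?d) * hh l"
    using l birth_N by (cases "l = N") (auto simp: death_rate_def)
  finally show ?thesis .
qed

lemma birth_le: "N \<ge> 2 \<Longrightarrow> a \<ge> 0 \<Longrightarrow> l \<le> N \<Longrightarrow> birth_rate N a l \<le> real l * (a / 4)"
proof -
  assume N: "N \<ge> 2" and a: "a \<ge> 0" and l: "l \<le> N"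
  show ?thesis
  proof (cases "l = 0")
    case True then show ?thesis by (simp add: birth_rate_def)
  next
    case False
    have pos: "real N * (real N - 1) > 0" using N by simp
    have x: "real l - 1 \<ge> 0" "real N - real l \<ge> 0" using False l by auto
    have "4 * ((real l - 1) * (real N - real l)) \<le> (real N - 1)^2"
      using sum_squares_ge_zero[of "(real l - 1) - (real N - real l)" 0] 
      by (simp add: power2_eq_square algebra_simps)
    also have "\<dots> \<le> real N * (real N - 1)" using N by (simp add: power2_eq_square)
    finally have q: "4 * ((real l - 1) * (real N - real l)) \<le> real N * (real N - 1)" .
    have "a * (real l * (real l - 1) * (real N - real l)) \<le> real l * (a/4) * (real N * (real N - 1))"
      using mult_left_mono[OF q, of "real l * a"] a by (simp add: algebra_simps)
    then show ?thesis unfolding birth_rate_def using pos by (simp add: divide_le_eq)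
  qed
qed

lemma Qh_le: "N \<ge> 2 \<Longrightarrow> a \<ge> 0 \<Longrightarrow> l \<le> N \<Longrightarrow> (\<Sum>j\<in>{0..N}. gen N a l j * hh j) \<le> - real l"
proof -
  assume N: "N \<ge> 2" and a: "a \<ge> 0" and l: "l \<le> N"
  show ?thesis
  proof (cases "l = 0")
    case True
    then show ?thesis using Qh_eq[OF l] by (simp add: birth_rate_def death_rate_def)
  next
    case False
    then obtain l' where l': "l = Suc l'" by (cases l) auto
    have e: "(\<Sum>j\<in>{0..N}. gen N a l j * hh j) = birth_rate N a l * DD (N - Suc l) - real l * DD (N - l)"
      unfolding Qh_eq[OF l] using l' by (simp add: hh_Suc death_rate_def algebra_simps)
    show ?thesis
    proof (cases "l = N")
      case True
      then show ?thesis unfolding e by (simp add: birth_N DD_def)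
    next
      case False
      then have "N - l = Suc (N - Suc l)" using l by simp
      then have d: "DD (N - l) = 1 + (a/4) * DD (N - Suc l)" by (simp add: DD_Suc)
      have "birth_rate N a l * DD (N - Suc l) \<le> real l * (a/4) * DD (N - Suc l)"
        by (rule mult_right_mono[OF birth_le[OF N a l] DD_nonneg[OF a]])
      then show ?thesis unfolding e d by (simp add: algebra_simps)
    qed
  qed
qed

lemma hh_N_le: "a \<ge> 0 \<Longrightarrow> hh N \<le> (\<Sum>j\<in>{1..N}. \<Sum>i\<in>{0..j}. (a / 4) ^ i)"
proof -
  assume a: "a \<ge> 0"
  have "hh N = (\<Sum>k\<in>{1..N}. DD (N + 1 - k - 1))"
    unfolding hh_def by simp
  also have "\<dots> = (\<Sum>k\<in>{1..N}. DD (k - 1))"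
    by (subst sum.atLeastAtMost_rev) (intro sum.cong refl, simp)
  also have "\<dots> \<le> (\<Sum>j\<in>{1..N}. \<Sum>i\<in>{0..j}. (a / 4) ^ i)"
    unfolding DD_def using a by (intro sum_mono sum_mono2) auto
  finally show ?thesis .
qed



definition pp :: "real \<Rightarrow> nat \<Rightarrow> real" where "pp t j = trans_prob N a t N j"
definition gg :: "real \<Rightarrow> real" where "gg t = (\<Sum>j\<in>{0..N}. pp t j * hh j)"
definition ff :: "real \<Rightarrow> real" where "ff t = (\<Sum>j\<in>{0..N}. real j * pp t j)"
definition gd :: "real \<Rightarrow> real" where
  "gd t = (\<Sum>l\<in>{0..N}. pp t l * (\<Sum>j\<in>{0..N}. gen N a l j * hh j))"

lemma gg_deriv: "(gg has_field_derivative gd t) (at t)"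
proof -
  have "(gg has_field_derivative (\<Sum>j\<in>{0..N}. (\<Sum>l\<in>{0..N}. pp t l * gen N a l j) * hh j)) (at t)"
    unfolding gg_def[abs_def] pp_def
    by (intro DERIV_sum DERIV_cmult_right trans_prob_deriv)
  also have "(\<Sum>j\<in>{0..N}. (\<Sum>l\<in>{0..N}. pp t l * gen N a l j) * hh j) = gd t"
  proof -
    have "(\<Sum>j\<in>{0..N}. (\<Sum>l\<in>{0..N}. pp t l * gen N a l j) * hh j)
        = (\<Sum>j\<in>{0..N}. \<Sum>l\<in>{0..N}. pp t l * (gen N a l j * hh j))"
      by (simp only: sum_distrib_right mult.assoc)
    also have "\<dots> = (\<Sum>l\<in>{0..N}. \<Sum>j\<in>{0..N}. pp t l * (gen N a l j * hh j))"
      by (rule sum.swap)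
    also have "\<dots> = gd t"
      unfolding gd_def by (simp only: sum_distrib_left)
    finally show ?thesis .
  qed
  finally show ?thesis .
qed

lemma pp_cont: "continuous_on S (\<lambda>t. pp t j)"
  unfolding pp_def by (intro continuous_at_imp_continuous_on ballI DERIV_isCont[OF trans_prob_deriv])

lemma ff_cont: "continuous_on S ff"
  unfolding ff_def by (intro continuous_intros pp_cont)

lemma pp_nonneg: "a \<ge> 0 \<Longrightarrow> t \<ge> 0 \<Longrightarrow> pp t j \<ge> 0"
  unfolding pp_def by (rule trans_prob_nonneg) auto

lemma ff_nonneg: "a \<ge> 0 \<Longrightarrow> t \<ge> 0 \<Longrightarrow> ff t \<ge> 0"
  unfolding ff_def by (intro sum_nonneg mult_nonneg_nonneg pp_nonneg) auto

lemma gd_le: "N \<ge> 2 \<Longrightarrow> a \<ge> 0 \<Longrightarrow> t \<ge> 0 \<Longrightarrow> gd t \<le> - ff t"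
proof -
  assume N: "N \<ge> 2" and a: "a \<ge> 0" and t: "t \<ge> 0"
  have "gd t \<le> (\<Sum>l\<in>{0..N}. pp t l * (- real l))"
    unfolding gd_def by (intro sum_mono mult_left_mono Qh_le[OF N a] pp_nonneg[OF a t]) auto
  also have "\<dots> = - ff t" unfolding ff_def sum_negf[symmetric] by (intro sum.cong refl) simp
  finally show ?thesis .
qed

lemma gg_0: "gg 0 = hh N"
proof -
  have p0: "pp 0 j = (if j = N then 1 else 0)" for j
    unfolding pp_def trans_prob_eq powser_zero by (simp add: cf_def)
  have "gg 0 = (\<Sum>j\<in>{0..N}. (if j = N then hh j else 0))"
    unfolding gg_def by (intro sum.cong refl) (simp add: p0)
  then show ?thesis by simp
qed

lemma gg_nonneg: "a \<ge> 0 \<Longrightarrow> t \<ge> 0 \<Longrightarrow> gg t \<ge> 0"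
  unfolding gg_def by (intro sum_nonneg mult_nonneg_nonneg pp_nonneg hh_nonneg) auto

lemma ff_integral: "N \<ge> 2 \<Longrightarrow> a \<ge> 0 \<Longrightarrow> T \<ge> 0 \<Longrightarrow>
  (ff has_integral integral {0..T} ff) {0..T} \<and> integral {0..T} ff \<le> hh N"
proof -
  assume N: "N \<ge> 2" and a: "a \<ge> 0" and T: "T \<ge> 0"
  have fi: "(ff has_integral integral {0..T} ff) {0..T}"
    by (intro integrable_integral integrable_continuous_interval ff_cont)
  have "(gd has_integral (gg T - gg 0)) {0..T}"
    using T by (intro fundamental_theorem_of_calculus)
      (auto simp: has_real_derivative_iff_has_vector_derivative[symmetric]
            intro: has_field_derivative_at_within gg_deriv)
  then have "((\<lambda>t. - gd t) has_integral - (gg T - gg 0)) {0..T}"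
    by (rule has_integral_neg)
  then have "integral {0..T} ff \<le> - (gg T - gg 0)"
  proof (rule has_integral_le[OF fi])
    fix x assume "x \<in> {0..T}"
    then show "ff x \<le> - gd x" using gd_le[OF N a, of x] by simp
  qed
  also have "\<dots> \<le> hh N" using gg_nonneg[OF a T] gg_0 by simp
  finally show ?thesis using fi by simp
qed


lemma pp_meas[measurable]: "(\<lambda>t. pp t j) \<in> borel_measurable borel"
  by (rule borel_measurable_continuous_onI[OF pp_cont])

lemma ff_meas[measurable]: "ff \<in> borel_measurable borel"
  by (rule borel_measurable_continuous_onI[OF ff_cont])

lemma ennreal_nat_mult: "(x::real) \<ge> 0 \<Longrightarrow> of_nat j * ennreal x = ennreal (real j * x)"
  by (simp add: ennreal_mult' ennreal_of_nat_eq_real_of_nat)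

lemma main_bound: "N \<ge> 2 \<Longrightarrow> a \<ge> 0 \<Longrightarrow>
  (\<Sum>j\<in>{1..N}. of_nat j * occ_time N a j) \<le> ennreal (hh N)"
proof -
  assume N: "N \<ge> 2" and a: "a \<ge> 0"
  have "(\<Sum>j\<in>{1..N}. of_nat j * occ_time N a j)
     = (\<Sum>j\<in>{1..N}. \<integral>\<^sup>+ t. of_nat j * (ennreal (pp t j) * indicator {0..} t) \<partial>lborel)"
    unfolding occ_time_def pp_def[symmetric]
    by (intro sum.cong refl nn_integral_cmult[symmetric]) measurable
  also have "\<dots> = \<integral>\<^sup>+ t. (\<Sum>j\<in>{1..N}. of_nat j * (ennreal (pp t j) * indicator {0..} t)) \<partial>lborel"
    by (intro nn_integral_sum[symmetric]) measurable
  also have "\<dots> = \<integral>\<^sup>+ t. (SUP n. ennreal (indicator {0..real n} t * ff t)) \<partial>lborel"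
  proof (intro nn_integral_cong)
    fix t :: real
    show "(\<Sum>j\<in>{1..N}. of_nat j * (ennreal (pp t j) * indicator {0..} t))
        = (SUP n. ennreal (indicator {0..real n} t * ff t))"
    proof (cases "t \<ge> 0")
      case False
      then show ?thesis by (simp add: indicator_def)
    next
      case True
      have ff': "ff t = (\<Sum>j\<in>{1..N}. real j * pp t j)"
        unfolding ff_def by (simp add: sum.atLeast_Suc_atMost)
      have "(\<Sum>j\<in>{1..N}. of_nat j * (ennreal (pp t j) * indicator {0..} t))
          = (\<Sum>j\<in>{1..N}. ennreal (real j * pp t j))"
        using True by (intro sum.cong refl) (simp add: ennreal_nat_mult pp_nonneg[OF a])
      also have "\<dots> = ennreal (ff t)"
        unfolding ff' using True by (intro sum_ennreal) (simp add: pp_nonneg[OF a])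
      also have "\<dots> = (SUP n. ennreal (indicator {0..real n} t * ff t))"
      proof (rule antisym)
        obtain n :: nat where "t \<le> real n" using real_arch_simple by blast
        then have eq: "ennreal (ff t) = ennreal (indicator {0..real n} t * ff t)" using True by simp
        have "ennreal (indicator {0..real n} t * ff t) \<le> (SUP n. ennreal (indicator {0..real n} t * ff t))"
          by (rule SUP_upper) simp
        then show "ennreal (ff t) \<le> (SUP n. ennreal (indicator {0..real n} t * ff t))"
          unfolding eq[symmetric] .
        show "(SUP n. ennreal (indicator {0..real n} t * ff t)) \<le> ennreal (ff t)"
          using ff_nonneg[OF a True] by (intro SUP_least ennreal_leI) (simp add: indicator_def)
      qed
      finally show ?thesis .
    qed
  qed
  also have "\<dots> = (SUP n. \<integral>\<^sup>+ t. ennreal (indicator {0..real n} t * ff t) \<partial>lborel)"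
  proof (rule nn_integral_monotone_convergence_SUP)
    show "incseq (\<lambda>n t. ennreal (indicator {0..real n} t * ff t))"
    proof (intro incseq_SucI le_funI ennreal_leI)
      fix n :: nat and t :: real
      show "indicator {0..real n} t * ff t \<le> indicator {0..real (Suc n)} t * ff t"
        using ff_nonneg[OF a, of t] by (simp add: indicator_def)
    qed
  qed measurable
  also have "\<dots> \<le> ennreal (hh N)"
  proof (rule SUP_least)
    fix n :: nat
    have "(\<integral>\<^sup>+ t. ennreal (indicator {0..real n} t * ff t) \<partial>lborel) = ennreal (integral {0..real n} ff)"
      using ff_integral[OF N a, of "real n"] ff_nonneg[OF a]
      by (intro nn_integral_has_integral_lebesgue) auto
    also have "\<dots> \<le> ennreal (hh N)"
      using ff_integral[OF N a, of "real n"] by (intro ennreal_leI) auto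
    finally show "(\<integral>\<^sup>+ t. ennreal (indicator {0..real n} t * ff t) \<partial>lborel) \<le> ennreal (hh N)" .
  qed
  finally show ?thesis .
qed

end

theorem lemma5p1:
  fixes N :: nat and a :: real
  assumes "N \<ge> 2" and "a \<ge> 0"
  shows "(\<Sum>j\<in>{1..N}. of_nat j * occ_time N a j)
           \<le> ennreal (\<Sum>j\<in>{1..N}. \<Sum>i\<in>{0..j}. (a / 4) ^ i)"
  using L.main_bound[OF assms] L.hh_N_le[OF assms(2)] ennreal_leI order_trans by blast

end
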